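(* For every finite set $\Gamma$ of IPL formulas and every IPL formula $\varphi$: $\Gamma \Vdash^{*} \varphi$ if and only if $\Gamma \vdash \varphi$ (i.e., $\varphi$ is derivable from $\Gamma$ in intuitionistic propositional logic).
   Context: Fix a denumerable set $\mathbb{A}$ of atoms. IPL formulas are built from atoms and $\bot$ using $\wedge,\vee,\to$. An atomic rule has the form $(Q_1\triangleright q_1,\dots,Q_n\triangleright q_n)\Rightarrow q$ with $n\ge 0$, $q,q_i\in\mathbb{A}$ and $Q_i$ finite (possibly empty) sets of atoms. A base is a set of atomic rules; $\mathscr{C}\supseteq\mathscr{B}$ means $\mathscr{C}$ extends $\mathscr{B}$. Derivability $\vdash_{\mathscr{B}}$ (between finite sets of atoms and atoms) is the least relation such that $S\cup\{q\}\vdash_{\mathscr{B}} q$, and if $(Q_1\triangleright q_1,\dots,Q_n\triangleright q_n)\Rightarrow q\in\mathscr{B}$ and $S\cup Q_i\vdash_{\mathscr{B}} q_i$ for all $i$, then $S\vdash_{\mathscr{B}} q$. The relation $\Vdash^{*}_{\mathscr{B}}$ is defined inductively by: (At) $\Vdash^{*}_{\mathscr{B}} p$ iff $\emptyset\vdash_{\mathscr{B}} p$; ($\to$) $\Vdash^{*}_{\mathscr{B}}\varphi\to\psi$ iff $\varphi\Vdash^{*}_{\mathscr{B}}\psi$; ($\wedge^*$) $\Vdash^{*}_{\mathscr{B}}\varphi\wedge\psi$ iff for every $\mathscr{C}\supseteq\mathscr{B}$ and every atom $p$, if $\varphi,\psi\Vdash^{*}_{\mathscr{C}} p$ then $\Vdash^{*}_{\mathscr{C}}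 p$; ($\vee$) $\Vdash^{*}_{\mathscr{B}}\varphi\vee\psi$ iff for every $\mathscr{C}\supseteq\mathscr{B}$ and every atom $p$, if $\varphi\Vdash^{*}_{\mathscr{C}} p$ and $\psi\Vdash^{*}_{\mathscr{C}} p$ then $\Vdash^{*}_{\mathscr{C}} p$; ($\bot$) $\Vdash^{*}_{\mathscr{B}}\bot$ iff $\Vdash^{*}_{\mathscr{B}} p$ for every atom $p$; (Inf) for nonempty finite $\Gamma$, $\Gamma\Vdash^{*}_{\mathscr{B}}\varphi$ iff for every $\mathscr{C}\supseteq\mathscr{B}$, if $\Vdash^{*}_{\mathscr{C}}\psi$ for all $\psi\in\Gamma$ then $\Vdash^{*}_{\mathscr{C}}\varphi$ (for empty $\Gamma$, $\Gamma\Vdash^{*}_{\mathscr{B}}\varphi$ means $\Vdash^{*}_{\mathscr{B}}\varphi$). Finally $\Gamma\Vdash^{*}\varphi$ iff $\Gamma\Vdash^{*}_{\mathscr{B}}\varphi$ for every base $\mathscr{B}$. *)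

theory Defs
  imports Main "HOL-Library.FSet"
begin

type_synonym atom = nat

datatype form =
    Atom atom
  | Bot
  | And form form
  | Or form form
  | Imp form form

text \<open>An atomic rule (Q1|>q1, ..., Qn|>qn) => q, with finite atom sets Qi.\<close>
type_synonym rule = "((atom fset \<times> atom) list) \<times> atom"
type_synonym base = "rule set"

inductive derives :: "base \<Rightarrow> atom set \<Rightarrow> atom \<Rightarrow> bool" where
  ref: "q \<in> S \<Longrightarrow> derives B S q"
| app: "(prems, q) \<in> B \<Longrightarrow> (\<forall>(Qi, qi) \<in> set prems. derives B (S \<union> fset Qi) qi)
        \<Longrightarrow> derives B S q"

text \<open>Support |=*_B phi, with clause ->, /\*, \/ unfolding (Inf) for the
  nonempty contexts {phi}, {phi,psi}.\<close>
fun supp :: "base \<Rightarrow> form \<Rightarrow> bool" where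
  "supp B (Atom p) = derives B {} p"
| "supp B Bot = (\<forall>p. derives B {} p)"
| "supp B (Imp \<phi> \<psi>) = (\<forall>C. B \<subseteq> C \<longrightarrow> supp C \<phi> \<longrightarrow> supp C \<psi>)"
| "supp B (And \<phi> \<psi>) =
     (\<forall>C p. B \<subseteq> C \<longrightarrow>
        (\<forall>D. C \<subseteq> D \<longrightarrow> supp D \<phi> \<longrightarrow> supp D \<psi> \<longrightarrow> derives D {} p) \<longrightarrow>
        derives C {} p)"
| "supp B (Or \<phi> \<psi>) =
     (\<forall>C p. B \<subseteq> C \<longrightarrow>
        (\<forall>D. C \<subseteq> D \<longrightarrow> supp D \<phi> \<longrightarrow> derives D {} p) \<longrightarrow>
        (\<forall>D. C \<subseteq> D \<longrightarrow> supp D \<psi> \<longrightarrow> derives D {} p) \<longrightarrow>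
        derives C {} p)"

definition supp_cons :: "base \<Rightarrow> form set \<Rightarrow> form \<Rightarrow> bool" where
  "supp_cons B \<Gamma> \<phi> =
     (if \<Gamma> = {} then supp B \<phi>
      else (\<forall>C. B \<subseteq> C \<longrightarrow> (\<forall>\<psi>\<in>\<Gamma>. supp C \<psi>) \<longrightarrow> supp C \<phi>))"

definition valid :: "form set \<Rightarrow> form \<Rightarrow> bool" where
  "valid \<Gamma> \<phi> = (\<forall>B. supp_cons B \<Gamma> \<phi>)"

inductive ipl :: "form set \<Rightarrow> form \<Rightarrow> bool" where
  ax: "\<phi> \<in> \<Gamma> \<Longrightarrow> ipl \<Gamma> \<phi>"
| botE: "ipl \<Gamma> Bot \<Longrightarrow> ipl \<Gamma> \<phi>"
| andI: "ipl \<Gamma> \<phi> \<Longrightarrow> ipl \<Gamma> \<psi> \<Longrightarrow> ipl \<Gamma> (And \<phi> \<psi>)"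
| andE1: "ipl \<Gamma> (And \<phi> \<psi>) \<Longrightarrow> ipl \<Gamma> \<phi>"
| andE2: "ipl \<Gamma> (And \<phi> \<psi>) \<Longrightarrow> ipl \<Gamma> \<psi>"
| orI1: "ipl \<Gamma> \<phi> \<Longrightarrow> ipl \<Gamma> (Or \<phi> \<psi>)"
| orI2: "ipl \<Gamma> \<psi> \<Longrightarrow> ipl \<Gamma> (Or \<phi> \<psi>)"
| orE: "ipl \<Gamma> (Or \<phi> \<psi>) \<Longrightarrow> ipl (insert \<phi> \<Gamma>) \<chi> \<Longrightarrow> ipl (insert \<psi> \<Gamma>) \<chi>
        \<Longrightarrow> ipl \<Gamma> \<chi>"
| impI: "ipl (insert \<phi> \<Gamma>) \<psi> \<Longrightarrow> ipl \<Gamma> (Imp \<phi> \<psi>)"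
| impE: "ipl \<Gamma> (Imp \<phi> \<psi>) \<Longrightarrow> ipl \<Gamma> \<phi> \<Longrightarrow> ipl \<Gamma> \<psi>"

end

theory Submission
  imports Defs "HOL-Library.Countable"
begin

lemma derives_mono:
  assumes "derives B S p"
  shows "B \<subseteq> B' \<Longrightarrow> S \<subseteq> S' \<Longrightarrow> derives B' S' p"
  using assms
proof (induction arbitrary: S' B' rule: derives.induct)
  case (ref q S B)
  then show ?case by (auto intro: derives.ref)
next
  case (app prems q B S)
  show ?case
  proof (rule derives.app[of prems q])
    show "(prems, q) \<in> B'" using app by auto
    show "\<forall>(Qi, qi)\<in>set prems. derives B' (S' \<union> fset Qi) qi"
    proof (intro ballI, clarify)
      fix Qi qi assume m: "(Qi, qi) \<in> set prems"
      have "S \<union> fset Qi \<subseteq> S' \<union> fset Qi" using app.prems by auto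
      then show "derives B' (S' \<union> fset Qi) qi" using app.IH m app.prems(1) by blast
    qed
  qed
qed

lemma derives_elim_axioms:
  assumes "derives B' S p"
  shows "B' \<subseteq> B \<union> {([], q) | q. q \<in> A} \<Longrightarrow> derives B (S \<union> A) p"
  using assms
proof (induction rule: derives.induct)
  case (ref q S B')
  then show ?case by (auto intro: derives.ref)
next
  case (app prems q B' S)
  show ?case
  proof (cases "(prems, q) \<in> B")
    case True
    show ?thesis
    proof (rule derives.app[of prems q])
      show "(prems, q) \<in> B" by fact
      show "\<forall>(Qi, qi)\<in>set prems. derives B (S \<union> A \<union> fset Qi) qi"
      proof (intro ballI, clarify)
        fix Qi qi assume m: "(Qi, qi) \<in> set prems"
        have "derives B (S \<union> fset Qi \<union> A) qi" using app.IH m app.prems(1) by blast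
        moreover have "S \<union> fset Qi \<union> A = S \<union> A \<union> fset Qi" by auto
        ultimately show "derives B (S \<union> A \<union> fset Qi) qi" by simp
      qed
    qed
  next
    case False
    then have "q \<in> A" using app by auto
    then show ?thesis by (auto intro: derives.ref)
  qed
qed

lemma derives_elim_axiom:
  assumes "derives (insert ([], q) B) S p"
  shows "derives B (insert q S) p"
  using derives_elim_axioms[OF assms, of B "{q}"] by auto

lemma derives_axiom: "([], q) \<in> B \<Longrightarrow> derives B S q"
  by (rule derives.app[of "[]"]) auto

lemma supp_mono: "supp B \<phi> \<Longrightarrow> B \<subseteq> C \<Longrightarrow> supp C \<phi>"
proof (induction \<phi> arbitrary: B C)
  case (Atom x)
  then show ?case by (simp, meson derives_mono order_refl)
next
  case Bot
  then show ?case by (simp, meson derives_mono order_refl)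
next
  case (And \<phi>1 \<phi>2)
  then show ?case unfolding supp.simps by (meson subset_trans)
next
  case (Or \<phi>1 \<phi>2)
  then show ?case unfolding supp.simps by (meson subset_trans)
next
  case (Imp \<phi>1 \<phi>2)
  then show ?case unfolding supp.simps by (meson subset_trans)
qed

section \<open>Soundness\<close>

lemma suppImpE: "supp D (Imp a b) \<Longrightarrow> D \<subseteq> E \<Longrightarrow> supp E a \<Longrightarrow> supp E b"
  by (simp only: supp.simps; blast)

lemma suppAndE: "supp D (And a b) \<Longrightarrow>
  \<forall>E. D \<subseteq> E \<longrightarrow> supp E a \<longrightarrow> supp E b \<longrightarrow> derives E {} p \<Longrightarrow> derives D {} p"
  by (simp only: supp.simps; blast)

lemma suppOrE: "supp D (Or a b) \<Longrightarrow>
  \<forall>E. D \<subseteq> E \<longrightarrow> supp E a \<longrightarrow> derives E {} p \<Longrightarrow>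
  \<forall>E. D \<subseteq> E \<longrightarrow> supp E b \<longrightarrow> derives E {} p \<Longrightarrow> derives D {} p"
  by (simp only: supp.simps; blast)


lemma supp_bot_all: "(\<forall>p. derives B {} p) \<Longrightarrow> supp B \<chi>"
proof (induction \<chi> arbitrary: B)
  case (Imp \<chi>1 \<chi>2)
  show ?case unfolding supp.simps
  proof (intro allI HOL.impI)
    fix C assume "B \<subseteq> C" "supp C \<chi>1"
    then have "\<forall>p. derives C {} p" using Imp.prems derives_mono by blast
    then show "supp C \<chi>2" using Imp.IH(2) by blast
  qed
next
  case (And \<chi>1 \<chi>2)
  show ?case unfolding supp.simps
  proof (intro allI HOL.impI)
    fix C p assume "B \<subseteq> C"
    then show "derives C {} p" using And.prems derives_mono[of B "{}" p C "{}"] by blast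
  qed
next
  case (Or \<chi>1 \<chi>2)
  show ?case unfolding supp.simps
  proof (intro allI HOL.impI)
    fix C p assume "B \<subseteq> C"
    then show "derives C {} p" using Or.prems derives_mono[of B "{}" p C "{}"] by blast
  qed
qed auto

lemma trans_hyp: "\<forall>D. C \<subseteq> D \<longrightarrow> P D \<Longrightarrow> C \<subseteq> D' \<Longrightarrow> \<forall>E. D' \<subseteq> E \<longrightarrow> P E"
  by (meson subset_trans)

lemma or_elim_gen:
  assumes "supp B (Or \<phi> \<psi>)"
    and "\<forall>C. B \<subseteq> C \<longrightarrow> supp C \<phi> \<longrightarrow> supp C \<chi>"
    and "\<forall>C. B \<subseteq> C \<longrightarrow> supp C \<psi> \<longrightarrow> supp C \<chi>"
  shows "supp B \<chi>"
  using assms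
proof (induction \<chi> arbitrary: B)
  case (Atom x)
  have "\<forall>D. B \<subseteq> D \<longrightarrow> supp D \<phi> \<longrightarrow> derives D {} x" using Atom.prems(2) by simp
  moreover have "\<forall>D. B \<subseteq> D \<longrightarrow> supp D \<psi> \<longrightarrow> derives D {} x" using Atom.prems(3) by simp
  ultimately show ?case unfolding supp.simps by (rule suppOrE[OF Atom.prems(1)])
next
  case Bot
  show ?case unfolding supp.simps
  proof
    fix x
    have "\<forall>D. B \<subseteq> D \<longrightarrow> supp D \<phi> \<longrightarrow> derives D {} x" using Bot.prems(2) by (simp only: supp.simps; blast)
    moreover have "\<forall>D. B \<subseteq> D \<longrightarrow> supp D \<psi> \<longrightarrow> derives D {} x" using Bot.prems(3) by (simp only: supp.simps; blast)
    ultimately show "derives B {} x" by (rule suppOrE[OF Bot.prems(1)])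
  qed
next
  case (Imp \<chi>1 \<chi>2)
  show ?case unfolding supp.simps
  proof (intro allI HOL.impI)
    fix C assume BC: "B \<subseteq> C" and s1: "supp C \<chi>1"
    show "supp C \<chi>2"
    proof (rule Imp.IH(2))
      show "supp C (Or \<phi> \<psi>)" using supp_mono Imp.prems(1) BC by blast
      show "\<forall>D. C \<subseteq> D \<longrightarrow> supp D \<phi> \<longrightarrow> supp D \<chi>2"
      proof (intro allI HOL.impI)
        fix D assume CD: "C \<subseteq> D" and "supp D \<phi>"
        then have "supp D (Imp \<chi>1 \<chi>2)" using Imp.prems(2) subset_trans[OF BC CD] by blast
        moreover have "supp D \<chi>1" using s1 CD supp_mono by blast
        ultimately show "supp D \<chi>2" by (rule suppImpE[OF _ order_refl])
      qed
      show "\<forall>D. C \<subseteq> D \<longrightarrow> supp D \<psi> \<longrightarrow> supp D \<chi>2"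
      proof (intro allI HOL.impI)
        fix D assume CD: "C \<subseteq> D" and "supp D \<psi>"
        then have "supp D (Imp \<chi>1 \<chi>2)" using Imp.prems(3) subset_trans[OF BC CD] by blast
        moreover have "supp D \<chi>1" using s1 CD supp_mono by blast
        ultimately show "supp D \<chi>2" by (rule suppImpE[OF _ order_refl])
      qed
    qed
  qed
next
  case (And \<chi>1 \<chi>2)
  show ?case unfolding supp.simps
  proof (intro allI HOL.impI)
    fix C p assume BC: "B \<subseteq> C"
      and H: "\<forall>D. C \<subseteq> D \<longrightarrow> supp D \<chi>1 \<longrightarrow> supp D \<chi>2 \<longrightarrow> derives D {} p"
    have O: "supp C (Or \<phi> \<psi>)" using supp_mono And.prems(1) BC by blast
    have "\<forall>D. C \<subseteq> D \<longrightarrow> supp D \<phi> \<longrightarrow> derives D {} p"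
    proof (intro allI HOL.impI)
      fix D assume CD: "C \<subseteq> D" and "supp D \<phi>"
      then have "supp D (And \<chi>1 \<chi>2)" using And.prems(2) subset_trans[OF BC CD] by blast
      moreover have "\<forall>E. D \<subseteq> E \<longrightarrow> supp E \<chi>1 \<longrightarrow> supp E \<chi>2 \<longrightarrow> derives E {} p"
        by (rule trans_hyp[OF H CD])
      ultimately show "derives D {} p" by (rule suppAndE)
    qed
    moreover have "\<forall>D. C \<subseteq> D \<longrightarrow> supp D \<psi> \<longrightarrow> derives D {} p"
    proof (intro allI HOL.impI)
      fix D assume CD: "C \<subseteq> D" and "supp D \<psi>"
      then have "supp D (And \<chi>1 \<chi>2)" using And.prems(3) subset_trans[OF BC CD] by blast
      moreover have "\<forall>E. D \<subseteq> E \<longrightarrow> supp E \<chi>1 \<longrightarrow> supp E \<chi>2 \<longrightarrow> derives E {} p"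
        by (rule trans_hyp[OF H CD])
      ultimately show "derives D {} p" by (rule suppAndE)
    qed
    ultimately show "derives C {} p" by (rule suppOrE[OF O])
  qed
next
  case (Or \<chi>1 \<chi>2)
  show ?case unfolding supp.simps
  proof (intro allI HOL.impI)
    fix C p assume BC: "B \<subseteq> C"
      and H1: "\<forall>D. C \<subseteq> D \<longrightarrow> supp D \<chi>1 \<longrightarrow> derives D {} p"
      and H2: "\<forall>D. C \<subseteq> D \<longrightarrow> supp D \<chi>2 \<longrightarrow> derives D {} p"
    have O: "supp C (Or \<phi> \<psi>)" using supp_mono Or.prems(1) BC by blast
    have "\<forall>D. C \<subseteq> D \<longrightarrow> supp D \<phi> \<longrightarrow> derives D {} p"
    proof (intro allI HOL.impI)
      fix D assume CD: "C \<subseteq> D" and "supp D \<phi>"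
      then have "supp D (Or \<chi>1 \<chi>2)" using Or.prems(2) subset_trans[OF BC CD] by blast
      moreover have "\<forall>E. D \<subseteq> E \<longrightarrow> supp E \<chi>1 \<longrightarrow> derives E {} p" by (rule trans_hyp[OF H1 CD])
      moreover have "\<forall>E. D \<subseteq> E \<longrightarrow> supp E \<chi>2 \<longrightarrow> derives E {} p" by (rule trans_hyp[OF H2 CD])
      ultimately show "derives D {} p" by (rule suppOrE)
    qed
    moreover have "\<forall>D. C \<subseteq> D \<longrightarrow> supp D \<psi> \<longrightarrow> derives D {} p"
    proof (intro allI HOL.impI)
      fix D assume CD: "C \<subseteq> D" and "supp D \<psi>"
      then have "supp D (Or \<chi>1 \<chi>2)" using Or.prems(3) subset_trans[OF BC CD] by blast
      moreover have "\<forall>E. D \<subseteq> E \<longrightarrow> supp E \<chi>1 \<longrightarrow> derives E {} p" by (rule trans_hyp[OF H1 CD])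
      moreover have "\<forall>E. D \<subseteq> E \<longrightarrow> supp E \<chi>2 \<longrightarrow> derives E {} p" by (rule trans_hyp[OF H2 CD])
      ultimately show "derives D {} p" by (rule suppOrE)
    qed
    ultimately show "derives C {} p" by (rule suppOrE[OF O])
  qed
qed

lemma and_elim_gen:
  assumes "supp B (And \<phi> \<psi>)"
    and "\<forall>C. B \<subseteq> C \<longrightarrow> supp C \<phi> \<longrightarrow> supp C \<psi> \<longrightarrow> supp C \<chi>"
  shows "supp B \<chi>"
  using assms
proof (induction \<chi> arbitrary: B)
  case (Atom x)
  have "\<forall>D. B \<subseteq> D \<longrightarrow> supp D \<phi> \<longrightarrow> supp D \<psi> \<longrightarrow> derives D {} x"
    using Atom.prems(2) by (simp only: supp.simps)
  then show ?case unfolding supp.simps by (rule suppAndE[OF Atom.prems(1)])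
next
  case Bot
  show ?case unfolding supp.simps
  proof
    fix x
    have "\<forall>D. B \<subseteq> D \<longrightarrow> supp D \<phi> \<longrightarrow> supp D \<psi> \<longrightarrow> derives D {} x"
      using Bot.prems(2) by (simp only: supp.simps; blast)
    then show "derives B {} x" by (rule suppAndE[OF Bot.prems(1)])
  qed
next
  case (Imp \<chi>1 \<chi>2)
  show ?case unfolding supp.simps
  proof (intro allI HOL.impI)
    fix C assume BC: "B \<subseteq> C" and s1: "supp C \<chi>1"
    show "supp C \<chi>2"
    proof (rule Imp.IH(2))
      show "supp C (And \<phi> \<psi>)" using supp_mono Imp.prems(1) BC by blast
      show "\<forall>D. C \<subseteq> D \<longrightarrow> supp D \<phi> \<longrightarrow> supp D \<psi> \<longrightarrow> supp D \<chi>2"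
      proof (intro allI HOL.impI)
        fix D assume CD: "C \<subseteq> D" and "supp D \<phi>" "supp D \<psi>"
        then have "supp D (Imp \<chi>1 \<chi>2)" using Imp.prems(2) subset_trans[OF BC CD] by blast
        moreover have "supp D \<chi>1" using s1 CD supp_mono by blast
        ultimately show "supp D \<chi>2" by (rule suppImpE[OF _ order_refl])
      qed
    qed
  qed
next
  case (And \<chi>1 \<chi>2)
  show ?case unfolding supp.simps
  proof (intro allI HOL.impI)
    fix C p assume BC: "B \<subseteq> C"
      and H: "\<forall>D. C \<subseteq> D \<longrightarrow> supp D \<chi>1 \<longrightarrow> supp D \<chi>2 \<longrightarrow> derives D {} p"
    have O: "supp C (And \<phi> \<psi>)" using supp_mono And.prems(1) BC by blast
    have "\<forall>D. C \<subseteq> D \<longrightarrow> supp D \<phi> \<longrightarrow> supp D \<psi> \<longrightarrow> derives D {} p"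
    proof (intro allI HOL.impI)
      fix D assume CD: "C \<subseteq> D" and "supp D \<phi>" "supp D \<psi>"
      then have "supp D (And \<chi>1 \<chi>2)" using And.prems(2) subset_trans[OF BC CD] by blast
      moreover have "\<forall>E. D \<subseteq> E \<longrightarrow> supp E \<chi>1 \<longrightarrow> supp E \<chi>2 \<longrightarrow> derives E {} p"
        by (rule trans_hyp[OF H CD])
      ultimately show "derives D {} p" by (rule suppAndE)
    qed
    then show "derives C {} p" by (rule suppAndE[OF O])
  qed
next
  case (Or \<chi>1 \<chi>2)
  show ?case unfolding supp.simps
  proof (intro allI HOL.impI)
    fix C p assume BC: "B \<subseteq> C"
      and H1: "\<forall>D. C \<subseteq> D \<longrightarrow> supp D \<chi>1 \<longrightarrow> derives D {} p"
      and H2: "\<forall>D. C \<subseteq> D \<longrightarrow> supp D \<chi>2 \<longrightarrow> derives D {} p"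
    have O: "supp C (And \<phi> \<psi>)" using supp_mono Or.prems(1) BC by blast
    have "\<forall>D. C \<subseteq> D \<longrightarrow> supp D \<phi> \<longrightarrow> supp D \<psi> \<longrightarrow> derives D {} p"
    proof (intro allI HOL.impI)
      fix D assume CD: "C \<subseteq> D" and "supp D \<phi>" "supp D \<psi>"
      then have "supp D (Or \<chi>1 \<chi>2)" using Or.prems(2) subset_trans[OF BC CD] by blast
      moreover have "\<forall>E. D \<subseteq> E \<longrightarrow> supp E \<chi>1 \<longrightarrow> derives E {} p" by (rule trans_hyp[OF H1 CD])
      moreover have "\<forall>E. D \<subseteq> E \<longrightarrow> supp E \<chi>2 \<longrightarrow> derives E {} p" by (rule trans_hyp[OF H2 CD])
      ultimately show "derives D {} p" by (rule suppOrE)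
    qed
    then show "derives C {} p" by (rule suppAndE[OF O])
  qed
qed

lemma supp_andI: "supp B \<phi> \<Longrightarrow> supp B \<psi> \<Longrightarrow> supp B (And \<phi> \<psi>)"
  unfolding supp.simps(4)
proof (intro allI HOL.impI)
  fix C p assume "supp B \<phi>" "supp B \<psi>" "B \<subseteq> C"
    and H: "\<forall>D. C \<subseteq> D \<longrightarrow> supp D \<phi> \<longrightarrow> supp D \<psi> \<longrightarrow> derives D {} p"
  then have "supp C \<phi>" "supp C \<psi>" using supp_mono by blast+
  then show "derives C {} p" using H by blast
qed

lemma supp_orI1: "supp B \<phi> \<Longrightarrow> supp B (Or \<phi> \<psi>)"
  unfolding supp.simps(5)
proof (intro allI HOL.impI)
  fix C p assume "supp B \<phi>" "B \<subseteq> C"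
    and H: "\<forall>D. C \<subseteq> D \<longrightarrow> supp D \<phi> \<longrightarrow> derives D {} p"
  then have "supp C \<phi>" using supp_mono by blast
  then show "derives C {} p" using H by blast
qed

lemma supp_orI2: "supp B \<psi> \<Longrightarrow> supp B (Or \<phi> \<psi>)"
  unfolding supp.simps(5)
proof (intro allI HOL.impI)
  fix C p assume "supp B \<psi>" "B \<subseteq> C"
    and H: "\<forall>D. C \<subseteq> D \<longrightarrow> supp D \<psi> \<longrightarrow> derives D {} p"
  then have "supp C \<psi>" using supp_mono by blast
  then show "derives C {} p" using H by blast
qed

lemma sound: "ipl \<Gamma> \<phi> \<Longrightarrow> \<forall>\<psi>\<in>\<Gamma>. supp B \<psi> \<Longrightarrow> supp B \<phi>"
proof (induction arbitrary: B rule: ipl.induct)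
  case (ax \<phi> \<Gamma>)
  then show ?case by blast
next
  case (botE \<Gamma> \<phi>)
  then have "supp B Bot" by blast
  then show ?case using supp_bot_all by (simp only: supp.simps)
next
  case (andI \<Gamma> \<phi> \<psi>)
  then show ?case using supp_andI by blast
next
  case (andE1 \<Gamma> \<phi> \<psi>)
  have "supp B (And \<phi> \<psi>)" using andE1 by blast
  then show ?case by (rule and_elim_gen) blast
next
  case (andE2 \<Gamma> \<phi> \<psi>)
  have "supp B (And \<phi> \<psi>)" using andE2 by blast
  then show ?case by (rule and_elim_gen) blast
next
  case (orI1 \<Gamma> \<phi> \<psi>)
  then show ?case using supp_orI1 by blast
next
  case (orI2 \<Gamma> \<psi> \<phi>)
  then show ?case using supp_orI2 by blast
next
  case (orE \<Gamma> \<phi> \<psi> \<chi>)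
  have "supp B (Or \<phi> \<psi>)" using orE by blast
  moreover have "\<forall>C. B \<subseteq> C \<longrightarrow> supp C \<phi> \<longrightarrow> supp C \<chi>"
  proof (intro allI HOL.impI)
    fix C assume "B \<subseteq> C" "supp C \<phi>"
    then have "\<forall>x\<in>insert \<phi> \<Gamma>. supp C x" using orE.prems supp_mono by blast
    then show "supp C \<chi>" using orE.IH(2) by blast
  qed
  moreover have "\<forall>C. B \<subseteq> C \<longrightarrow> supp C \<psi> \<longrightarrow> supp C \<chi>"
  proof (intro allI HOL.impI)
    fix C assume "B \<subseteq> C" "supp C \<psi>"
    then have "\<forall>x\<in>insert \<psi> \<Gamma>. supp C x" using orE.prems supp_mono by blast
    then show "supp C \<chi>" using orE.IH(3) by blast
  qed
  ultimately show ?case by (rule or_elim_gen)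
next
  case (impI \<phi> \<Gamma> \<psi>)
  show ?case unfolding supp.simps(3)
  proof (intro allI HOL.impI)
    fix C assume "B \<subseteq> C" "supp C \<phi>"
    then have "\<forall>x\<in>insert \<phi> \<Gamma>. supp C x" using impI.prems supp_mono by blast
    then show "supp C \<psi>" using impI.IH by blast
  qed
next
  case (impE \<Gamma> \<phi> \<psi>)
  have "supp B (Imp \<phi> \<psi>)" "supp B \<phi>" using impE by blast+
  then show ?case by (rule suppImpE[OF _ order_refl])
qed

section \<open>Completeness\<close>

instance form :: countable by countable_datatype

fun atoms :: "form \<Rightarrow> nat set" where
  "atoms (Atom a) = {a}"
| "atoms Bot = {}"
| "atoms (And a b) = atoms a \<union> atoms b"
| "atoms (Or a b) = atoms a \<union> atoms b"
| "atoms (Imp a b) = atoms a \<union> atoms b"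

lemma finite_atoms: "finite (atoms \<chi>)"
  by (induction \<chi>) auto

definition wff :: "nat \<Rightarrow> form \<Rightarrow> bool" where
  "wff M \<chi> = (\<forall>a\<in>atoms \<chi>. a < M)"

definition fl :: "nat \<Rightarrow> form \<Rightarrow> atom" where
  "fl M \<chi> = (case \<chi> of Atom a \<Rightarrow> a | _ \<Rightarrow> M + to_nat \<chi>)"

definition sh :: "nat \<Rightarrow> atom \<Rightarrow> form" where
  "sh M a = (if M \<le> a then from_nat (a - M) else Atom a)"

lemma fl_Atom[simp]: "fl M (Atom a) = a" by (simp add: fl_def)

lemma sh_fl: "wff M \<chi> \<Longrightarrow> sh M (fl M \<chi>) = \<chi>"
  by (cases \<chi>) (auto simp: wff_def fl_def sh_def)

lemma wff_simps[simp]: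
  "wff M (And a b) = (wff M a \<and> wff M b)"
  "wff M (Or a b) = (wff M a \<and> wff M b)"
  "wff M (Imp a b) = (wff M a \<and> wff M b)"
  by (auto simp: wff_def)

inductive_set NB :: "nat \<Rightarrow> rule set" for M where
  nAndI: "wff M (And a b) \<Longrightarrow> ([({||}, fl M a), ({||}, fl M b)], fl M (And a b)) \<in> NB M"
| nAndE1: "wff M (And a b) \<Longrightarrow> ([({||}, fl M (And a b))], fl M a) \<in> NB M"
| nAndE2: "wff M (And a b) \<Longrightarrow> ([({||}, fl M (And a b))], fl M b) \<in> NB M"
| nOrI1: "wff M (Or a b) \<Longrightarrow> ([({||}, fl M a)], fl M (Or a b)) \<in> NB M"
| nOrI2: "wff M (Or a b) \<Longrightarrow> ([({||}, fl M b)], fl M (Or a b)) \<in> NB M"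
| nOrE: "wff M (Or a b) \<Longrightarrow>
    ([({||}, fl M (Or a b)), ({|fl M a|}, r), ({|fl M b|}, r)], r) \<in> NB M"
| nImpI: "wff M (Imp a b) \<Longrightarrow> ([({|fl M a|}, fl M b)], fl M (Imp a b)) \<in> NB M"
| nImpE: "wff M (Imp a b) \<Longrightarrow> ([({||}, fl M (Imp a b)), ({||}, fl M a)], fl M b) \<in> NB M"
| nBotE: "([({||}, fl M Bot)], r) \<in> NB M"

lemma app1: "(prems, q) \<in> B \<Longrightarrow> (\<And>Qi qi. (Qi, qi) \<in> set prems \<Longrightarrow> derives B (S \<union> fset Qi) qi)
  \<Longrightarrow> derives B S q"
  by (rule derives.app) auto

lemma dmono: "derives B {} p \<Longrightarrow> B \<subseteq> C \<Longrightarrow> derives C S p"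
  using derives_mono by blast

lemma key: "wff M \<chi> \<Longrightarrow> NB M \<subseteq> C \<Longrightarrow> supp C \<chi> \<longleftrightarrow> derives C {} (fl M \<chi>)"
proof (induction \<chi> arbitrary: C)
  case (Atom x)
  then show ?case by simp
next
  case Bot
  show ?case
  proof
    assume "supp C Bot"
    then show "derives C {} (fl M Bot)" by simp
  next
    assume d: "derives C {} (fl M Bot)"
    show "supp C Bot" unfolding supp.simps
    proof
      fix p
      have r: "([({||}, fl M Bot)], p) \<in> C" using Bot.prems nBotE by blast
      show "derives C {} p" by (rule app1[OF r]) (use d in auto)
    qed
  qed
next
  case (And a b)
  have wa: "wff M a" and wb: "wff M b" using And.prems by auto
  show ?case
  proof
    assume s: "supp C (And a b)"
    have "\<forall>E. C \<subseteq> E \<longrightarrow> supp E a \<longrightarrow> supp E b \<longrightarrow> derives E {} (fl M (And a b))"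
    proof (intro allI HOL.impI)
      fix E assume CE: "C \<subseteq> E" and "supp E a" "supp E b"
      have NE: "NB M \<subseteq> E" using CE And.prems by blast
      have da: "derives E {} (fl M a)" using And.IH(1)[OF wa NE] \<open>supp E a\<close> by blast
      have db: "derives E {} (fl M b)" using And.IH(2)[OF wb NE] \<open>supp E b\<close> by blast
      have r: "([({||}, fl M a), ({||}, fl M b)], fl M (And a b)) \<in> E"
        using NE nAndI And.prems by blast
      show "derives E {} (fl M (And a b))" by (rule app1[OF r]) (use da db in auto)
    qed
    then show "derives C {} (fl M (And a b))" by (rule suppAndE[OF s])
  next
    assume d: "derives C {} (fl M (And a b))"
    show "supp C (And a b)" unfolding supp.simps(4)
    proof (intro allI HOL.impI)
      fix D p assume CD: "C \<subseteq> D"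
        and H: "\<forall>E. D \<subseteq> E \<longrightarrow> supp E a \<longrightarrow> supp E b \<longrightarrow> derives E {} p"
      have ND: "NB M \<subseteq> D" using CD And.prems by blast
      have dD: "derives D {} (fl M (And a b))" using dmono[OF d CD] .
      have r1: "([({||}, fl M (And a b))], fl M a) \<in> D" using ND nAndE1 And.prems by blast
      have r2: "([({||}, fl M (And a b))], fl M b) \<in> D" using ND nAndE2 And.prems by blast
      have "derives D {} (fl M a)" by (rule app1[OF r1]) (use dD in auto)
      then have "supp D a" using And.IH(1)[OF wa ND] by blast
      have "derives D {} (fl M b)" by (rule app1[OF r2]) (use dD in auto)
      then have "supp D b" using And.IH(2)[OF wb ND] by blast
      show "derives D {} p" using H \<open>supp D a\<close> \<open>supp D b\<close> by blast
    qed
  qed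
next
  case (Or a b)
  have wa: "wff M a" and wb: "wff M b" using Or.prems by auto
  show ?case
  proof
    assume s: "supp C (Or a b)"
    have "\<forall>E. C \<subseteq> E \<longrightarrow> supp E a \<longrightarrow> derives E {} (fl M (Or a b))"
    proof (intro allI HOL.impI)
      fix E assume CE: "C \<subseteq> E" and "supp E a"
      have NE: "NB M \<subseteq> E" using CE Or.prems by blast
      have da: "derives E {} (fl M a)" using Or.IH(1)[OF wa NE] \<open>supp E a\<close> by blast
      have r: "([({||}, fl M a)], fl M (Or a b)) \<in> E" using NE nOrI1 Or.prems by blast
      show "derives E {} (fl M (Or a b))" by (rule app1[OF r]) (use da in auto)
    qed
    moreover have "\<forall>E. C \<subseteq> E \<longrightarrow> supp E b \<longrightarrow> derives E {} (fl M (Or a b))"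
    proof (intro allI HOL.impI)
      fix E assume CE: "C \<subseteq> E" and "supp E b"
      have NE: "NB M \<subseteq> E" using CE Or.prems by blast
      have db: "derives E {} (fl M b)" using Or.IH(2)[OF wb NE] \<open>supp E b\<close> by blast
      have r: "([({||}, fl M b)], fl M (Or a b)) \<in> E" using NE nOrI2 Or.prems by blast
      show "derives E {} (fl M (Or a b))" by (rule app1[OF r]) (use db in auto)
    qed
    ultimately show "derives C {} (fl M (Or a b))" by (rule suppOrE[OF s])
  next
    assume d: "derives C {} (fl M (Or a b))"
    show "supp C (Or a b)" unfolding supp.simps(5)
    proof (intro allI HOL.impI)
      fix D p assume CD: "C \<subseteq> D"
        and H1: "\<forall>E. D \<subseteq> E \<longrightarrow> supp E a \<longrightarrow> derives E {} p"
        and H2: "\<forall>E. D \<subseteq> E \<longrightarrow> supp E b \<longrightarrow> derives E {} p"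
      have ND: "NB M \<subseteq> D" using CD Or.prems by blast
      have dD: "derives D {} (fl M (Or a b))" using dmono[OF d CD] .
      define E1 where "E1 = insert ([], fl M a) D"
      have NE1: "NB M \<subseteq> E1" using ND E1_def by blast
      have "derives E1 {} (fl M a)" unfolding E1_def by (rule derives_axiom) simp
      then have "supp E1 a" using Or.IH(1)[OF wa NE1] by blast
      then have "derives E1 {} p" using H1 E1_def by blast
      then have d1: "derives D {fl M a} p" unfolding E1_def using derives_elim_axiom by blast
      define E2 where "E2 = insert ([], fl M b) D"
      have NE2: "NB M \<subseteq> E2" using ND E2_def by blast
      have "derives E2 {} (fl M b)" unfolding E2_def by (rule derives_axiom) simp
      then have "supp E2 b" using Or.IH(2)[OF wb NE2] by blast
      then have "derives E2 {} p" using H2 E2_def by blast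
      then have d2: "derives D {fl M b} p" unfolding E2_def using derives_elim_axiom by blast
      have r: "([({||}, fl M (Or a b)), ({|fl M a|}, p), ({|fl M b|}, p)], p) \<in> D"
        using ND nOrE Or.prems by blast
      show "derives D {} p" by (rule app1[OF r]) (use dD d1 d2 in auto)
    qed
  qed
next
  case (Imp a b)
  have wa: "wff M a" and wb: "wff M b" using Imp.prems by auto
  show ?case
  proof
    assume s: "supp C (Imp a b)"
    define E where "E = insert ([], fl M a) C"
    have NE: "NB M \<subseteq> E" using Imp.prems E_def by blast
    have "derives E {} (fl M a)" unfolding E_def by (rule derives_axiom) simp
    then have "supp E a" using Imp.IH(1)[OF wa NE] by blast
    then have "supp E b" using suppImpE[OF s] E_def by blast
    then have "derives E {} (fl M b)" using Imp.IH(2)[OF wb NE] by blast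
    then have d1: "derives C {fl M a} (fl M b)" unfolding E_def using derives_elim_axiom by blast
    have r: "([({|fl M a|}, fl M b)], fl M (Imp a b)) \<in> C" using Imp.prems nImpI by blast
    show "derives C {} (fl M (Imp a b))" by (rule app1[OF r]) (use d1 in auto)
  next
    assume d: "derives C {} (fl M (Imp a b))"
    show "supp C (Imp a b)" unfolding supp.simps(3)
    proof (intro allI HOL.impI)
      fix D assume CD: "C \<subseteq> D" and sa: "supp D a"
      have ND: "NB M \<subseteq> D" using CD Imp.prems by blast
      have dD: "derives D {} (fl M (Imp a b))" using dmono[OF d CD] .
      have da: "derives D {} (fl M a)" using Imp.IH(1)[OF wa ND] sa by blast
      have r: "([({||}, fl M (Imp a b)), ({||}, fl M a)], fl M b) \<in> D" using ND nImpE Imp.prems by blast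
      have "derives D {} (fl M b)" by (rule app1[OF r]) (use dD da in auto)
      then show "supp D b" using Imp.IH(2)[OF wb ND] by blast
    qed
  qed
qed

lemma wff_Bot[simp]: "wff M Bot" by (simp add: wff_def)

lemma back_tr: "derives B S p \<Longrightarrow> B = NB M \<Longrightarrow> ipl (sh M ` S) (sh M p)"
proof (induction rule: derives.induct)
  case (ref q S B)
  then show ?case by (auto intro: ipl.ax)
next
  case (app prems q B S)
  have IH: "ipl (sh M ` (S \<union> fset Qi)) (sh M qi)" if "(Qi, qi) \<in> set prems" for Qi qi
  proof -
    from bspec[OF app.IH that]
    have "derives B (S \<union> fset Qi) qi \<and> (B = NB M \<longrightarrow> ipl (sh M ` (S \<union> fset Qi)) (sh M qi))"
      by simp
    then show ?thesis using app.prems by blast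
  qed
  have mem: "(prems, q) \<in> NB M" using app.hyps app.prems by simp
  from mem show ?case
  proof cases
    case (nAndI a b)
    have "ipl (sh M ` S) a" using IH[of "{||}" "fl M a"] nAndI by (simp add: sh_fl)
    moreover have "ipl (sh M ` S) b" using IH[of "{||}" "fl M b"] nAndI by (simp add: sh_fl)
    ultimately show ?thesis using nAndI by (simp add: sh_fl ipl.andI)
  next
    case (nAndE1 a b)
    have "ipl (sh M ` S) (And a b)" using IH[of "{||}" "fl M (And a b)"] nAndE1 by (simp add: sh_fl del: wff_simps)
    then have "ipl (sh M ` S) a" by (rule ipl.andE1)
    then show ?thesis using nAndE1 by (simp add: sh_fl)
  next
    case (nAndE2 a b)
    have "ipl (sh M ` S) (And a b)" using IH[of "{||}" "fl M (And a b)"] nAndE2 by (simp add: sh_fl del: wff_simps)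
    then have "ipl (sh M ` S) b" by (rule ipl.andE2)
    then show ?thesis using nAndE2 by (simp add: sh_fl)
  next
    case (nOrI1 a b)
    have "ipl (sh M ` S) a" using IH[of "{||}" "fl M a"] nOrI1 by (simp add: sh_fl)
    then have "ipl (sh M ` S) (Or a b)" by (rule ipl.orI1)
    then show ?thesis using nOrI1 by (simp add: sh_fl del: wff_simps)
  next
    case (nOrI2 a b)
    have "ipl (sh M ` S) b" using IH[of "{||}" "fl M b"] nOrI2 by (simp add: sh_fl)
    then have "ipl (sh M ` S) (Or a b)" by (rule ipl.orI2)
    then show ?thesis using nOrI2 by (simp add: sh_fl del: wff_simps)
  next
    case (nOrE a b)
    have 1: "ipl (sh M ` S) (Or a b)" using IH[of "{||}" "fl M (Or a b)"] nOrE by (simp add: sh_fl del: wff_simps)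
    have 2: "ipl (insert a (sh M ` S)) (sh M q)" using IH[of "{|fl M a|}" q] nOrE by (simp add: sh_fl)
    have 3: "ipl (insert b (sh M ` S)) (sh M q)" using IH[of "{|fl M b|}" q] nOrE by (simp add: sh_fl)
    from ipl.orE[OF 1 2 3] show ?thesis using nOrE by simp
  next
    case (nImpI a b)
    have "ipl (insert a (sh M ` S)) b" using IH[of "{|fl M a|}" "fl M b"] nImpI by (simp add: sh_fl)
    then have "ipl (sh M ` S) (Imp a b)" by (rule ipl.impI)
    then show ?thesis using nImpI by (simp add: sh_fl del: wff_simps)
  next
    case (nImpE a b)
    have 1: "ipl (sh M ` S) (Imp a b)" using IH[of "{||}" "fl M (Imp a b)"] nImpE by (simp add: sh_fl del: wff_simps)
    have 2: "ipl (sh M ` S) a" using IH[of "{||}" "fl M a"] nImpE by (simp add: sh_fl)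
    from ipl.impE[OF 1 2] show ?thesis using nImpE by (simp add: sh_fl)
  next
    case nBotE
    have "ipl (sh M ` S) Bot" using IH[of "{||}" "fl M Bot"] nBotE by (simp add: sh_fl)
    then have "ipl (sh M ` S) (sh M q)" by (rule ipl.botE)
    then show ?thesis using nBotE by simp
  qed
qed

lemma valid_iff: "valid \<Gamma> \<phi> \<longleftrightarrow> (\<forall>B. (\<forall>\<psi>\<in>\<Gamma>. supp B \<psi>) \<longrightarrow> supp B \<phi>)"
proof
  assume v: "valid \<Gamma> \<phi>"
  show "\<forall>B. (\<forall>\<psi>\<in>\<Gamma>. supp B \<psi>) \<longrightarrow> supp B \<phi>"
  proof (intro allI HOL.impI)
    fix B assume h: "\<forall>\<psi>\<in>\<Gamma>. supp B \<psi>"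
    from v have "supp_cons B \<Gamma> \<phi>" unfolding valid_def by blast
    then show "supp B \<phi>" using h unfolding supp_cons_def by (cases "\<Gamma> = {}") auto
  qed
next
  assume h: "\<forall>B. (\<forall>\<psi>\<in>\<Gamma>. supp B \<psi>) \<longrightarrow> supp B \<phi>"
  show "valid \<Gamma> \<phi>" unfolding valid_def supp_cons_def using h by auto
qed

theorem theorem2:
  fixes \<Gamma> :: "form set" and \<phi> :: form
  assumes "finite \<Gamma>"
  shows "valid \<Gamma> \<phi> \<longleftrightarrow> ipl \<Gamma> \<phi>"
proof
  assume "ipl \<Gamma> \<phi>"
  then show "valid \<Gamma> \<phi>" unfolding valid_iff using sound by blast
next
  assume v: "valid \<Gamma> \<phi>"
  have "finite (\<Union> (atoms ` insert \<phi> \<Gamma>))" using assms finite_atoms by blast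
  then obtain M where M: "\<forall>n\<in>\<Union> (atoms ` insert \<phi> \<Gamma>). n < M"
    using finite_nat_set_iff_bounded by blast
  have wff: "wff M \<chi>" if "\<chi> \<in> insert \<phi> \<Gamma>" for \<chi>
    using M that unfolding wff_def by blast
  define C where "C = NB M \<union> {([], q) | q. q \<in> fl M ` \<Gamma>}"
  have NC: "NB M \<subseteq> C" unfolding C_def by blast
  have "supp C \<psi>" if "\<psi> \<in> \<Gamma>" for \<psi>
  proof -
    have "derives C {} (fl M \<psi>)" by (rule derives_axiom) (use that in \<open>auto simp: C_def\<close>)
    then show ?thesis using key[OF wff NC] that by blast
  qed
  then have "supp C \<phi>" using v unfolding valid_iff by blast
  then have "derives C {} (fl M \<phi>)" using key[OF wff NC] by blast
  then have "derives (NB M) ({} \<union> fl M ` \<Gamma>) (fl M \<phi>)"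
    by (rule derives_elim_axioms) (auto simp: C_def)
  then have "ipl (sh M ` fl M ` \<Gamma>) (sh M (fl M \<phi>))" using back_tr[OF _ refl] by simp
  moreover have "sh M ` fl M ` \<Gamma> = \<Gamma>"
  proof -
    have "sh M ` fl M ` \<Gamma> = (\<lambda>x. x) ` \<Gamma>" unfolding image_image
      by (rule image_cong) (auto simp: sh_fl wff)
    then show ?thesis by simp
  qed
  moreover have "sh M (fl M \<phi>) = \<phi>" using sh_fl wff by blast
  ultimately show "ipl \<Gamma> \<phi>" by simp
qed

end
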